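(* Let $G$ be a temporal network whose TEG $\mathcal{G}$ is weakly connected, with each edge $(e_i,e_j)$ weighted by its inter-event time $\tau((e_i,e_j)) = t_j - t_i$. Consider paths in the underlying undirected graph of $\mathcal{G}$, i.e. sequences of vertices $x_0, x_1, \dots, x_k$ such that for each $r$ either $(x_{r-1},x_r)$ or $(x_r,x_{r-1})$ is an edge of $\mathcal{G}$. The signed length of such a path is $\sum_{r=1}^{k} s_r$, where $s_r = \tau((x_{r-1},x_r))$ if $(x_{r-1},x_r)$ is an edge of $\mathcal{G}$ (forward traversal) and $s_r = -\tau((x_r,x_{r-1}))$ otherwise (backward traversal). Then every path of maximal signed length contains both the earliest event and the latest event of the temporal network.
   Context: A temporal network is $G=G(V,E,T)$, where $V\subset\mathbb{N}$ is a set of nodes, $T\subset\mathbb{R}_{\ge 0}$ a non-empty set of times, and $E\subset V^2\times T$ a finite set of events $e_i=(u_i,v_i,t_i)$, with $u_i\neq v_i$. All event times $t_i$ are distinct, and events are indexed in increasing time order. For $\Delta t \in (0,\infty]$ and an event $e_i$ and a node $w\in\{u_i,v_i\}$, let $S(w;i)=\{k : w\in\{u_k,v_k\},\ 0<t_k-t_i<\Delta t\}$. The $\Delta t$-temporal event graph ($\Delta t$-TEG) is the directed graph whose vertex set is $E$ and whose edges are the pairs $(e_i,e_j)$ with $j=\min S(u_i;i)$ or $j=\min S(v_i;i)$ (i.e. each event is joined to the next event, within time $\Delta t$, of each of its two nodes). The TEG is the $\Delta t$-TEG with $\Delta t=\infty$. *)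

theory Defs
  imports Complex_Main "HOL-Library.Extended_Real"
begin

type_synonym event = "nat \<times> nat \<times> real"

definition ev_u :: "event \<Rightarrow> nat" where "ev_u e = fst e"
definition ev_v :: "event \<Rightarrow> nat" where "ev_v e = fst (snd e)"
definition ev_t :: "event \<Rightarrow> real" where "ev_t e = snd (snd e)"

definition temporal_network :: "nat set \<Rightarrow> real set \<Rightarrow> event set \<Rightarrow> bool" where
  "temporal_network V T E \<longleftrightarrow>
     T \<noteq> {} \<and> (\<forall>t\<in>T. 0 \<le> t) \<and> finite E \<and>
     (\<forall>e\<in>E. ev_u e \<in> V \<and> ev_v e \<in> V \<and> ev_t e \<in> T \<and> ev_u e \<noteq> ev_v e) \<and>
     inj_on ev_t E"

definition dt_teg_edge :: "ereal \<Rightarrow> event set \<Rightarrow> event \<Rightarrow> event \<Rightarrow> bool" where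
  "dt_teg_edge dt E e e' \<longleftrightarrow> e \<in> E \<and> e' \<in> E \<and>
     (\<exists>w\<in>{ev_u e, ev_v e}.
        w \<in> {ev_u e', ev_v e'} \<and> 0 < ev_t e' - ev_t e \<and> ereal (ev_t e' - ev_t e) < dt \<and>
        (\<forall>e''\<in>E. w \<in> {ev_u e'', ev_v e''} \<and> 0 < ev_t e'' - ev_t e \<and>
                   ereal (ev_t e'' - ev_t e) < dt \<longrightarrow> ev_t e' \<le> ev_t e''))"

definition teg_edge :: "event set \<Rightarrow> event \<Rightarrow> event \<Rightarrow> bool" where
  "teg_edge E = dt_teg_edge \<infinity> E"

definition teg_adj :: "event set \<Rightarrow> event \<Rightarrow> event \<Rightarrow> bool" where
  "teg_adj E x y \<longleftrightarrow> teg_edge E x y \<or> teg_edge E y x"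

definition teg_weakly_connected :: "event set \<Rightarrow> bool" where
  "teg_weakly_connected E \<longleftrightarrow> (\<forall>x\<in>E. \<forall>y\<in>E. (teg_adj E)\<^sup>*\<^sup>* x y)"

definition tau :: "event \<times> event \<Rightarrow> real" where
  "tau p = ev_t (snd p) - ev_t (fst p)"

definition teg_upath :: "event set \<Rightarrow> event list \<Rightarrow> bool" where
  "teg_upath E xs \<longleftrightarrow> xs \<noteq> [] \<and> set xs \<subseteq> E \<and>
     (\<forall>r. 0 < r \<and> r < length xs \<longrightarrow> teg_adj E (xs ! (r - 1)) (xs ! r))"

definition step_len :: "event set \<Rightarrow> event \<Rightarrow> event \<Rightarrow> real" where
  "step_len E a b = (if teg_edge E a b then tau (a, b) else - tau (b, a))"

definition signed_length :: "event set \<Rightarrow> event list \<Rightarrow> real" where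
  "signed_length E xs = (\<Sum>r = 1..<length xs. step_len E (xs ! (r - 1)) (xs ! r))"

end

theory Submission
  imports Defs
begin

lemma step_len_eq: "step_len E a b = ev_t b - ev_t a"
  by (simp add: step_len_def tau_def)

lemma tele: "(\<Sum>r = 1..<Suc n. (g::nat\<Rightarrow>real) r - g (r - 1)) = g n - g 0"
  by (induction n) auto

lemma signed_length_eq:
  assumes "xs \<noteq> []"
  shows "signed_length E xs = ev_t (last xs) - ev_t (hd xs)"
proof -
  obtain n where n: "length xs = Suc n" using assms by (cases xs) auto
  have "signed_length E xs = (\<Sum>r = 1..<Suc n. ev_t (xs ! r) - ev_t (xs ! (r - 1)))"
    unfolding signed_length_def n step_len_eq by simp
  also have "\<dots> = ev_t (xs ! n) - ev_t (xs ! 0)"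
    using tele[of "\<lambda>r. ev_t (xs ! r)" n] by simp
  also have "xs ! n = last xs" using n assms by (simp add: last_conv_nth)
  also have "xs ! 0 = hd xs" using assms by (simp add: hd_conv_nth)
  finally show ?thesis .
qed

lemma adj_in: "teg_adj E a b \<Longrightarrow> a \<in> E \<and> b \<in> E"
  unfolding teg_adj_def teg_edge_def dt_teg_edge_def by auto

lemma path_exists:
  assumes "(teg_adj E)\<^sup>*\<^sup>* x y" "x \<in> E"
  shows "\<exists>ys. teg_upath E ys \<and> hd ys = x \<and> last ys = y"
  using assms(1)
proof (induction rule: rtranclp_induct)
  case base
  then show ?case using assms(2) by (intro exI[of _ "[x]"]) (auto simp: teg_upath_def)
next
  case (step y z)
  then obtain ys where ys: "teg_upath E ys" "hd ys = x" "last ys = y" by blast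
  have ne: "ys \<noteq> []" using ys(1) teg_upath_def by auto
  have "teg_upath E (ys @ [z])"
    unfolding teg_upath_def
  proof (intro conjI allI impI)
    show "ys @ [z] \<noteq> []" by simp
    show "set (ys @ [z]) \<subseteq> E" using ys(1) adj_in[OF step(2)] by (auto simp: teg_upath_def)
  next
    fix r assume r: "0 < r \<and> r < length (ys @ [z])"
    show "teg_adj E ((ys @ [z]) ! (r - 1)) ((ys @ [z]) ! r)"
    proof (cases "r < length ys")
      case True
      then show ?thesis using ys(1) r by (auto simp: teg_upath_def nth_append)
    next
      case False
      then have "r = length ys" using r by simp
      then show ?thesis using step(2) ys(3) ne
        by (auto simp: nth_append last_conv_nth)
    qed
  qed
  moreover have "hd (ys @ [z]) = x" using ne ys(2) by simp
  ultimately show ?case by auto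
qed

theorem mainTheorem1:
  assumes "temporal_network V T E"
    and "teg_weakly_connected E"
    and "teg_upath E xs"
    and "\<forall>ys. teg_upath E ys \<longrightarrow> signed_length E ys \<le> signed_length E xs"
  shows "(\<forall>e\<in>E. (\<forall>e'\<in>E. ev_t e \<le> ev_t e') \<longrightarrow> e \<in> set xs) \<and>
         (\<forall>e\<in>E. (\<forall>e'\<in>E. ev_t e' \<le> ev_t e) \<longrightarrow> e \<in> set xs)"
proof -
  have ne: "xs \<noteq> []" and sub: "set xs \<subseteq> E" using assms(3) by (auto simp: teg_upath_def)
  have inj: "inj_on ev_t E" using assms(1) by (simp add: temporal_network_def)
  have hdE: "hd xs \<in> E" and lastE: "last xs \<in> E" using ne sub by auto
  have sx: "signed_length E xs = ev_t (last xs) - ev_t (hd xs)" using signed_length_eq[OF ne] .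
  have conn: "\<And>a b. a \<in> E \<Longrightarrow> b \<in> E \<Longrightarrow> \<exists>ys. teg_upath E ys \<and> hd ys = a \<and> last ys = b"
    using assms(2) path_exists unfolding teg_weakly_connected_def by blast
  have lenp: "\<And>ys. teg_upath E ys \<Longrightarrow> signed_length E ys = ev_t (last ys) - ev_t (hd ys)"
    using signed_length_eq teg_upath_def by blast
  show ?thesis
  proof (intro conjI ballI impI)
    fix e assume e: "e \<in> E" and m: "\<forall>e'\<in>E. ev_t e \<le> ev_t e'"
    obtain ys where ys: "teg_upath E ys" "hd ys = e" "last ys = last xs" using conn[OF e lastE] by blast
    have "ev_t (last xs) - ev_t e \<le> ev_t (last xs) - ev_t (hd xs)"
      using assms(4) ys lenp[OF ys(1)] sx by metis
    then have "ev_t (hd xs) = ev_t e" using m hdE by force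
    then have "hd xs = e" using inj hdE e by (meson inj_on_def)
    then show "e \<in> set xs" using ne by auto
  next
    fix e assume e: "e \<in> E" and m: "\<forall>e'\<in>E. ev_t e' \<le> ev_t e"
    obtain ys where ys: "teg_upath E ys" "hd ys = hd xs" "last ys = e" using conn[OF hdE e] by blast
    have "ev_t e - ev_t (hd xs) \<le> ev_t (last xs) - ev_t (hd xs)"
      using assms(4) ys lenp[OF ys(1)] sx by metis
    then have "ev_t (last xs) = ev_t e" using m lastE by force
    then have "last xs = e" using inj lastE e by (meson inj_on_def)
    then show "e \<in> set xs" using ne by auto
  qed
qed

end
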